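(* The following hold: (i) $(\gamma(n))_{n\ge2}$ is $\mathcal I_{\le 1/2}$-convergent to $1$; (ii) $(\tau(n))_{n\ge2}$ is $\mathcal I_{\le 1/2}$-convergent to $1$; (iii) $(N(n))_{n\ge2}$ is $\mathcal I_{\le 1/2}$-convergent to $2$. That is, for every $\varepsilon>0$ each of the sets $\{n\ge2:|\gamma(n)-1|\ge\varepsilon\}$, $\{n\ge2:|\tau(n)-1|\ge\varepsilon\}$, $\{n\ge2:|N(n)-2|\ge\varepsilon\}$ has convergence exponent at most $1/2$.
   Context: $\mathbb N$ denotes the set of positive integers. For $n\ge2$, $\gamma(n)$ is the number of representations $n=a^b$ with $a,b\in\mathbb N$; if $n=a_1^{b_1}=\cdots=a_{\gamma(n)}^{b_{\gamma(n)}}$ are all these representations, then $\tau(n)=b_1+\cdots+b_{\gamma(n)}$. $N(n)$ is the number of times $n$ occurs as an entry $\binom{m}{k}$ ($0\le k\le m$) of Pascal's triangle. For $A\subset\mathbb N$ the convergence exponent is $\lambda(A)=\inf\{t>0:\sum_{a\in A}a^{-t}<\infty\}$, and $\mathcal I_{\le 1/2}=\{A\subset\mathbb N:\lambda(A)\le 1/2\}$. A sequence $(x_n)$ is $\mathcal I$-convergent to $L$ if for every $\varepsilon>0$ the set $\{n:|x_n-L|\ge\varepsilon\}$ belongs to $\mathcal I$. *)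

theory Defs
  imports "HOL-Analysis.Analysis"
begin

definition gamma_rep :: "nat \<Rightarrow> nat" where
  "gamma_rep n = card {(a, b). a \<ge> 1 \<and> b \<ge> 1 \<and> a ^ b = n}"

definition tau_rep :: "nat \<Rightarrow> nat" where
  "tau_rep n = (\<Sum>(a, b) \<in> {(a, b). a \<ge> 1 \<and> b \<ge> 1 \<and> a ^ b = n}. b)"

definition pascal_mult :: "nat \<Rightarrow> nat" where
  "pascal_mult n = card {(m, k). k \<le> m \<and> m choose k = n}"

definition conv_exp :: "nat set \<Rightarrow> real" where
  "conv_exp A = Inf {t. t > 0 \<and> (\<lambda>a. real a powr (- t)) summable_on A}"

definition I_half :: "nat set set" where
  "I_half = {A. A \<subseteq> {1..} \<and> conv_exp A \<le> 1/2}"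

definition I_conv_from2 :: "nat set set \<Rightarrow> (nat \<Rightarrow> real) \<Rightarrow> real \<Rightarrow> bool" where
  "I_conv_from2 I x L \<longleftrightarrow> (\<forall>\<epsilon>>0. {n. n \<ge> 2 \<and> \<bar>x n - L\<bar> \<ge> \<epsilon>} \<in> I)"

end

theory Submission
  imports Defs
begin

lemma powr_bound:
  fixes t c r X :: real and x y :: nat
  assumes "t > 0" "c > 0" "r > 0" "x > 0" "X \<ge> c * real x ^ 2 * r ^ y"
  shows "X powr (-t) \<le> real x powr (-2*t) * (c powr (-t) * (r powr (-t)) ^ y)"
proof -
  have pos: "c * real x ^ 2 * r ^ y > 0" using assms by simp
  have 1: "X powr (-t) \<le> (c * real x ^ 2 * r ^ y) powr (-t)"
    by (rule powr_mono2') (use assms pos in auto)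
  have 2: "(c * real x ^ 2 * r ^ y) powr (-t) = c powr (-t) * (real x ^ 2) powr (-t) * (r ^ y) powr (-t)"
    using powr_mult[of "c*real x^2" "r^y" "-t"] powr_mult[of c "real x^2" "-t"] assms by simp
  have 3: "(real x ^ 2) powr (-t) = real x powr (-2*t)"
  proof -
    have e: "real x ^ 2 = real x powr 2" using assms by (simp add: powr_numeral)
    have "(real x powr 2) powr (-t) = real x powr (2 * (-t))" by (rule powr_powr)
    thus ?thesis unfolding e by simp
  qed
  have 4: "(r ^ y) powr (-t) = (r powr (-t)) ^ y"
  proof -
    have "r ^ y = r powr (real y)" using assms by (subst powr_realpow) auto
    hence "(r ^ y) powr (-t) = (r powr (-t)) powr (real y)" by (simp add: powr_powr mult.commute)
    also have "\<dots> = (r powr (-t)) ^ y" using assms by (subst powr_realpow) auto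
    finally show ?thesis .
  qed
  show ?thesis using 1 2 3 4 by (simp add: algebra_simps)
qed
lemma summable_image:
  fixes t c r :: real and J :: "(nat \<times> nat) set" and v :: "nat \<times> nat \<Rightarrow> nat"
  assumes t: "t > 1/2" and c: "c > 0" and r: "r > 1"
    and J: "\<And>x y. (x, y) \<in> J \<Longrightarrow> x > 0 \<and> real (v (x, y)) \<ge> c * real x ^ 2 * r ^ y"
  shows "(\<lambda>n. real n powr (-t)) summable_on (v ` J)"
proof -
  define u where "u x = real x powr (-2*t)" for x :: nat
  define w where "w y = c powr (-t) * (r powr (-t)) ^ y" for y :: nat
  have su: "summable u" unfolding u_def using summable_real_powr_iff[of "-2*t"] t by simp
  have "r powr (-t) < 1" using powr_less_one[of r "-t"] r t by simp
  hence "summable (\<lambda>y. (r powr (-t)) ^ y)" by (intro summable_geometric) simp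
  hence sw: "summable w" unfolding w_def by (rule summable_mult)
  have u0: "u x \<ge> 0" for x unfolding u_def by simp
  have w0: "w y \<ge> 0" for y unfolding w_def by simp
  have bnd: "real (v p) powr (-t) \<le> u (fst p) * w (snd p)" if "p \<in> J" for p
  proof -
    obtain x y where p: "p = (x, y)" by (cases p)
    show ?thesis using J[of x y] that p powr_bound[where t=t and c=c and r=r and X="real (v (x,y))" and x=x and y=y] t c r
      unfolding u_def w_def by simp
  qed
  let ?g = "\<lambda>n. real n powr (-t)"
  show ?thesis
  proof (rule nonneg_bdd_above_summable_on)
    show "bdd_above (sum ?g ` {F. F \<subseteq> v ` J \<and> finite F})"
    proof (rule bdd_aboveI2)
      fix G assume "G \<in> {F. F \<subseteq> v ` J \<and> finite F}"
      hence G: "G \<subseteq> v ` J" "finite G" by auto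
      obtain F where F: "F \<subseteq> J" "finite F" "G = v ` F"
        using finite_subset_image[OF G(2) G(1)] by blast
      have "sum ?g G \<le> sum (?g \<circ> v) F" unfolding F(3) by (rule sum_image_le) (use F in auto)
      also have "\<dots> \<le> sum (\<lambda>p. u (fst p) * w (snd p)) F"
        by (rule sum_mono) (use bnd F in auto)
      also have "\<dots> \<le> sum (\<lambda>p. u (fst p) * w (snd p)) (fst ` F \<times> snd ` F)"
        by (rule sum_mono2) (use F u0 w0 in \<open>auto intro: mult_nonneg_nonneg simp: rev_image_eqI\<close>)
      also have "\<dots> = sum u (fst ` F) * sum w (snd ` F)"
        by (simp add: sum_product sum.cartesian_product case_prod_beta)
      also have "\<dots> \<le> suminf u * suminf w"
        by (intro mult_mono sum_le_suminf su sw) (use F u0 w0 su in \<open>auto intro: sum_nonneg suminf_nonneg\<close>)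
      finally show "sum ?g G \<le> suminf u * suminf w" .
    qed
  qed simp
qed



lemma in_I_half:
  assumes "A \<subseteq> {1..}" "\<And>t. t > 1/2 \<Longrightarrow> (\<lambda>a. real a powr (- t)) summable_on A"
  shows "A \<in> I_half"
proof -
  let ?S = "{t. t > 0 \<and> (\<lambda>a. real a powr (- t)) summable_on A}"
  have bdd: "bdd_below ?S" by (rule bdd_belowI[of _ 0]) auto
  have "Inf ?S \<le> 1/2"
  proof (rule ccontr)
    assume "\<not> Inf ?S \<le> 1/2"
    hence h: "Inf ?S > 1/2" by simp
    define t where "t = (Inf ?S + 1/2) / 2"
    have "t \<in> ?S" using h assms(2)[of t] unfolding t_def by auto
    hence "Inf ?S \<le> t" by (rule cInf_lower[OF _ bdd])
    thus False using h unfolding t_def by simp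
  qed
  thus ?thesis using assms(1) unfolding I_half_def conv_exp_def by simp
qed



lemma pow_ineq: "(k::nat)^2 * 2^k \<le> 4 * 3^k"
proof (induction k)
  case 0 thus ?case by simp
next
  case (Suc k)
  show ?case
  proof (cases "k \<le> 5")
    case True
    hence "k \<in> {0,1,2,3,4,5}" by auto
    thus ?thesis by (auto simp: power2_eq_square)
  next
    case False
    hence h: "6 * k \<le> k * k" by simp
    have "2 * (Suc k)^2 \<le> 3 * k^2"
    proof -
      have "2*(Suc k)^2 = 2*(k*k)+4*k+2" by (simp add: power2_eq_square algebra_simps)
      moreover have "3*k^2 = 3*(k*k)" by (simp add: power2_eq_square)
      ultimately show ?thesis using h False by linarith
    qed
    hence "2 * (Suc k)^2 * 2^k \<le> 3 * k^2 * 2^k" by (rule mult_right_mono) simp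
    hence "(Suc k)^2 * 2^Suc k \<le> 3 * (k^2 * 2^k)" by (simp add: algebra_simps)
    also have "\<dots> \<le> 3 * (4 * 3^k)" using Suc.IH by simp
    finally show ?thesis by simp
  qed
qed

lemma binom_bound:
  assumes "2 \<le> k" "2 * k \<le> m"
  shows "1/16 * real m ^ 2 * (4/3) ^ k \<le> real (m choose k)"
proof -
  have kpos: "real k > 0" using assms by simp
  have mk: "2 \<le> real m / real k" using assms kpos by (simp add: field_simps)
  have "(real m / real k) ^ k = (real m / real k) ^ 2 * (real m / real k) ^ (k - 2)"
    using assms by (metis le_add_diff_inverse power_add)
  also have "\<dots> \<ge> (real m / real k) ^ 2 * 2 ^ (k - 2)"
    using mk by (intro mult_left_mono power_mono) auto
  finally have 1: "(real m / real k) ^ 2 * 2 ^ (k - 2) \<le> real (m choose k)"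
    using binomial_ge_n_over_k_pow_k[of k m, where 'a=real] assms by simp
  have e2: "(2::real) ^ k = 4 * 2 ^ (k - 2)" using assms
  proof -
    have e: "2 + (k-2) = k" using assms by simp
    have "(2::real)^(2 + (k-2)) = 2^2 * 2^(k-2)" by (rule power_add)
    from this[unfolded e] show ?thesis by simp
  qed
  have "1/16 * real m ^ 2 * (4/3) ^ k \<le> (real m / real k) ^ 2 * 2 ^ (k - 2)"
  proof -
    have "real (k ^ 2 * 2 ^ k) \<le> real (4 * 3 ^ k)"
      using pow_ineq[of k] by (simp only: of_nat_le_iff)
    hence "real k ^ 2 * 2 ^ k \<le> 4 * 3 ^ k" by simp
    hence "real k ^ 2 * 2 ^ k * (2/3) ^ k \<le> 4 * 3 ^ k * (2/3) ^ k"
      by (rule mult_right_mono) simp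
    moreover have "(2::real) ^ k * (2/3) ^ k = (4/3) ^ k" by (simp flip: power_mult_distrib)
    moreover have "(3::real) ^ k * (2/3) ^ k = 2 ^ k" by (simp flip: power_mult_distrib)
    ultimately have a: "real k ^ 2 * (4/3) ^ k \<le> 4 * 2 ^ k" by (simp add: mult.assoc)
    have "1/16 * real m ^ 2 * (4/3) ^ k * real k ^ 2 = 1/16 * real m ^ 2 * (real k ^ 2 * (4/3) ^ k)" by simp
    also have "\<dots> \<le> 1/16 * real m ^ 2 * (4 * 2 ^ k)" using a by (intro mult_left_mono) auto
    also have "\<dots> = real m ^ 2 * 2 ^ (k - 2)" using e2 by simp
    finally have "1/16 * real m ^ 2 * (4/3) ^ k * real k ^ 2 \<le> real m ^ 2 * 2 ^ (k - 2)" .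
    hence "1/16 * real m ^ 2 * (4/3) ^ k \<le> real m ^ 2 * 2 ^ (k - 2) / real k ^ 2"
      using kpos by (simp add: pos_le_divide_eq)
    thus ?thesis by (simp add: power_divide)
  qed
  with 1 show ?thesis by linarith
qed

lemma pow_bound:
  assumes "2 \<le> a" "2 \<le> b"
  shows "1/4 * real a ^ 2 * 2 ^ b \<le> real (a ^ b)"
proof -
  have "real a ^ b = real a ^ 2 * real a ^ (b - 2)" using assms by (metis le_add_diff_inverse power_add)
  also have "\<dots> \<ge> real a ^ 2 * 2 ^ (b - 2)" using assms by (intro mult_left_mono power_mono) auto
  finally have 1: "real a ^ 2 * 2 ^ (b - 2) \<le> real (a ^ b)" by simp
  have "(2::real) ^ b = 4 * 2 ^ (b - 2)" using assms
  proof -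
    have e: "2 + (b-2) = b" using assms by simp
    have "(2::real)^(2 + (b-2)) = 2^2 * 2^(b-2)" by (rule power_add)
    from this[unfolded e] show ?thesis by simp
  qed
  thus ?thesis using 1 by simp
qed


definition PP :: "nat set" where "PP = (\<lambda>(a,b). a^b) ` {(a,b). 2 \<le> a \<and> 2 \<le> b}"
definition BB :: "nat set" where "BB = (\<lambda>(m,k). m choose k) ` {(m,k). 2 \<le> k \<and> 2*k \<le> m}"

lemma PP_sum: "t > 1/2 \<Longrightarrow> (\<lambda>n. real n powr (-t)) summable_on PP"
  unfolding PP_def
proof (rule summable_image[where c="1/4" and r=2])
  fix x y assume "(x, y) \<in> {(a::nat,b::nat). 2 \<le> a \<and> 2 \<le> b}"
  thus "x > 0 \<and> real ((\<lambda>(a,b). a^b) (x, y)) \<ge> 1/4 * real x ^ 2 * 2 ^ y"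
    using pow_bound[of x y] by simp
qed auto

lemma BB_sum: "t > 1/2 \<Longrightarrow> (\<lambda>n. real n powr (-t)) summable_on BB"
  unfolding BB_def
proof (rule summable_image[where c="1/16" and r="4/3"])
  fix x y assume "(x, y) \<in> {(m::nat,k::nat). 2 \<le> k \<and> 2*k \<le> m}"
  thus "x > 0 \<and> real ((\<lambda>(m,k). m choose k) (x, y)) \<ge> 1/16 * real x ^ 2 * (4/3) ^ y"
    using binom_bound[of y x] by simp
qed auto

lemma reps_gamma:
  assumes "n \<ge> 2" "n \<notin> PP"
  shows "{(a,b). a \<ge> 1 \<and> b \<ge> 1 \<and> a^b = n} = {(n,1)}"
proof (intro equalityI subsetI)
  fix p assume "p \<in> {(a,b). a \<ge> 1 \<and> b \<ge> 1 \<and> a^b = n}"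
  then obtain a b where p: "p = (a,b)" "a \<ge> 1" "b \<ge> 1" "a^b = n" by auto
  show "p \<in> {(n,1)}"
  proof (cases "b = 1")
    case True thus ?thesis using p by simp
  next
    case False
    have "a \<noteq> 1" using p assms by auto
    hence "(a,b) \<in> {(a,b). 2 \<le> a \<and> 2 \<le> b}" using p False by auto
    hence "n \<in> PP" unfolding PP_def using p by (auto intro: rev_image_eqI)
    thus ?thesis using assms by simp
  qed
next
  fix p assume "p \<in> {(n,1::nat)}" thus "p \<in> {(a,b). a \<ge> 1 \<and> b \<ge> 1 \<and> a^b = n}" using assms by auto
qed

lemma reps_pascal:
  assumes "n \<ge> 3" "n \<notin> BB"
  shows "{(m,k). k \<le> m \<and> m choose k = n} = {(n,1),(n,n-1)}"
proof (intro equalityI subsetI)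
  fix p assume "p \<in> {(m,k). k \<le> m \<and> m choose k = n}"
  then obtain m k where p: "p = (m,k)" "k \<le> m" "m choose k = n" by auto
  show "p \<in> {(n,1),(n,n-1)}"
  proof -
    have k0: "k \<noteq> 0"
    proof
      assume "k = 0" with p assms show False by simp
    qed
    have km: "k \<noteq> m"
    proof
      assume "k = m" with p assms show False by simp
    qed
    show ?thesis
    proof (cases "k = 1")
      case True thus ?thesis using p by simp
    next
      case k1: False
      show ?thesis
      proof (cases "k = m - 1")
        case True
        have "m choose k = m choose 1" using True p binomial_symmetric[of 1 m] km by auto
        thus ?thesis using True p by simp
      next
        case False
        have range: "2 \<le> k" "k + 2 \<le> m" using k0 km k1 False p by auto
        have "n \<in> BB"
        proof (cases "2 * k \<le> m")
          case True
          thus ?thesis unfolding BB_def using range p by (auto intro!: rev_image_eqI[of "(m,k)"])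
        next
          case False
          have "m choose (m - k) = n" using binomial_symmetric[of k m] p by simp
          thus ?thesis unfolding BB_def using range False p by (auto intro!: rev_image_eqI[of "(m,m-k)"])
        qed
        thus ?thesis using assms by simp
      qed
    qed
  qed
next
  fix p assume "p \<in> {(n,1::nat),(n,n-1)}"
  moreover have "n choose (n - 1) = n" using binomial_symmetric[of 1 n] assms by simp
  ultimately show "p \<in> {(m,k). k \<le> m \<and> m choose k = n}" using assms by auto
qed

theorem theorem9:
  shows "I_conv_from2 I_half (\<lambda>n. real (gamma_rep n)) 1 \<and>
         I_conv_from2 I_half (\<lambda>n. real (tau_rep n)) 1 \<and>
         I_conv_from2 I_half (\<lambda>n. real (pascal_mult n)) 2"
  unfolding I_conv_from2_def
proof (intro conjI allI impI)
  fix e :: real assume e: "e > 0"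
  let ?S = "{n. n \<ge> 2 \<and> \<bar>real (gamma_rep n) - 1\<bar> \<ge> e}"
  have sub: "?S \<subseteq> PP"
  proof
    fix n assume n: "n \<in> ?S"
    hence n2: "n \<ge> 2" and ne: "\<bar>real (gamma_rep n) - 1\<bar> \<ge> e" by auto
    show "n \<in> PP"
    proof (rule ccontr)
      assume "n \<notin> PP"
      hence "gamma_rep n = 1" using n2 reps_gamma[of n] unfolding gamma_rep_def by simp
      thus False using ne e by simp
    qed
  qed
  show "?S \<in> I_half"
  proof (rule in_I_half)
    show "(\<lambda>a. real a powr (- t)) summable_on ?S" if "t > 1/2" for t
      by (rule summable_on_subset_banach[OF PP_sum[OF that] sub])
  qed auto
next
  fix e :: real assume e: "e > 0"
  let ?S = "{n. n \<ge> 2 \<and> \<bar>real (tau_rep n) - 1\<bar> \<ge> e}"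
  have sub: "?S \<subseteq> PP"
  proof
    fix n assume n: "n \<in> ?S"
    hence n2: "n \<ge> 2" and ne: "\<bar>real (tau_rep n) - 1\<bar> \<ge> e" by auto
    show "n \<in> PP"
    proof (rule ccontr)
      assume "n \<notin> PP"
      hence "tau_rep n = 1" using n2 reps_gamma[of n] unfolding tau_rep_def by simp
      thus False using ne e by simp
    qed
  qed
  show "?S \<in> I_half"
  proof (rule in_I_half)
    show "(\<lambda>a. real a powr (- t)) summable_on ?S" if "t > 1/2" for t
      by (rule summable_on_subset_banach[OF PP_sum[OF that] sub])
  qed auto
next
  fix e :: real assume e: "e > 0"
  let ?S = "{n. n \<ge> 2 \<and> \<bar>real (pascal_mult n) - 2\<bar> \<ge> e}"
  have sub: "?S \<subseteq> insert 2 BB"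
  proof
    fix n assume n: "n \<in> ?S"
    hence n2: "n \<ge> 2" and ne: "\<bar>real (pascal_mult n) - 2\<bar> \<ge> e" by auto
    show "n \<in> insert 2 BB"
    proof (rule ccontr)
      assume a: "n \<notin> insert 2 BB"
      hence n3: "n \<ge> 3" and nb: "n \<notin> BB" using n2 by auto
      hence "n - 1 \<noteq> 1" by simp
      hence c2: "card {(n,1::nat),(n,n-1)} = 2" by simp
      have "pascal_mult n = 2" unfolding pascal_mult_def reps_pascal[OF n3 nb] by (rule c2)
      thus False using ne e by simp
    qed
  qed
  show "?S \<in> I_half"
  proof (rule in_I_half)
    show "(\<lambda>a. real a powr (- t)) summable_on ?S" if "t > 1/2" for t
    proof (rule summable_on_subset_banach[OF _ sub])
      show "(\<lambda>a. real a powr (- t)) summable_on insert 2 BB"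
        using BB_sum[OF that] by (simp add: summable_on_insert_iff)
    qed
  qed auto
qed

end
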